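(* Let $p\in\mathbb{T}^{\mathcal{P}([n])}$ be a tropical Plücker vector, and let $L_p\subseteq\mathbb{T}^n$ be its tropical linear space. Under the identification $\mathbb{T}^{\mathcal{J}}\cong\mathbb{T}^n\times\mathbb{T}^n$, $x\mapsto((x_1,\dots,x_n),(x_{1^*},\dots,x_{n^*}))$, we have $\mathcal{C}(p)^\top=L_p\times L_{p^*}$.
   Context: $\mathbb{T}=\mathbb{R}\cup\{\infty\}$; $\mathcal{P}([n])$ the set of subsets of $[n]$. A tropical Wick vector is $p$ such that for all $S,T\subseteq[n]$ the minimum $\min_{i\in S\Delta T}(p_{S\Delta\{i\}}+p_{T\Delta\{i\}})$ is attained at least twice or equals $\infty$; a tropical Plücker vector is a tropical Wick vector whose support sets $\{S:p_S\neq\infty\}$ all have the same size $r_p$. Its dual is $p^*_S=p_{[n]\setminus S}$. Plücker circuits: for $T\subseteq[n]$ with $|T|=r_p+1$ define $d_T\in\mathbb{T}^n$ by $(d_T)_i=p_{T\setminus\{i\}}$ if $i\in T$, $\infty$ otherwise; a Plücker circuit is $d_T+\lambda\mathbf{1}$ ($\lambda\in\mathbb{R}$) with nonempty support. $x,y$ are tropically orthogonal if $\min_k(x_k+y_k)$ is attained at least twice or equals $\infty$. The tropical linear space $L_p\subseteq\mathbb{T}^n$ is the set of vectors tropically orthogonal to all Plücker circuits of $p$. Let $\mathcal{J}=\{1,\dots,n,1^*,\dots,n^*\}$; for $S\subseteq[n]$ let $\bar S=S\cup\{i^*:i\in[n]\setminus S\}$ and $\bar p_{\bar S}:=p_S$.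 For $T\subseteq[n]$, $(c_T)_i=\bar p_{\bar T\Delta\{i,i^*\}}$ if $i\in\bar T$, $\infty$ otherwise; the circuits of $p$ are vectors $c_T+\lambda\mathbf{1}$ with nonempty support, $\mathcal{C}(p)$ is their set, and $\mathcal{C}(p)^\top\subseteq\mathbb{T}^{\mathcal{J}}$ is the set of vectors tropically orthogonal to all of them. *)

theory Defs
  imports "HOL-Library.Extended_Real"
begin

text \<open>The tropical semiring T = R \<union> {\<infinity>} is modelled inside ereal; vectors are
  required to avoid -\<infinity>. Vectors in T^n are functions
  nat \<Rightarrow> ereal of which only the values on [n] matter. The index set J is
  modelled as nat + nat: Inl i stands for i and Inr i stands for i*.\<close>

definition trop :: "ereal \<Rightarrow> bool" where
  "trop a \<longleftrightarrow> a \<noteq> -\<infinity>"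

definition min_twice :: "'a set \<Rightarrow> ('a \<Rightarrow> ereal) \<Rightarrow> bool" where
  "min_twice I f \<longleftrightarrow> (INF i\<in>I. f i) = \<infinity> \<or>
     (\<exists>i\<in>I. \<exists>j\<in>I. i \<noteq> j \<and> f i = (INF k\<in>I. f k) \<and> f j = (INF k\<in>I. f k))"

definition trop_orth :: "'a set \<Rightarrow> ('a \<Rightarrow> ereal) \<Rightarrow> ('a \<Rightarrow> ereal) \<Rightarrow> bool" where
  "trop_orth I x y \<longleftrightarrow> min_twice I (\<lambda>k. x k + y k)"

definition trop_wick :: "nat \<Rightarrow> (nat set \<Rightarrow> ereal) \<Rightarrow> bool" where
  "trop_wick n p \<longleftrightarrow> (\<forall>S. S \<subseteq> {1..n} \<longrightarrow> trop (p S)) \<and>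
     (\<forall>S T. S \<subseteq> {1..n} \<longrightarrow> T \<subseteq> {1..n} \<longrightarrow>
        min_twice (S - T \<union> (T - S)) (\<lambda>i. p ((S - {i}) \<union> ({i} - S)) + p ((T - {i}) \<union> ({i} - T))))"

definition trop_pluecker :: "nat \<Rightarrow> (nat set \<Rightarrow> ereal) \<Rightarrow> bool" where
  "trop_pluecker n p \<longleftrightarrow> trop_wick n p \<and>
     (\<exists>r. \<forall>S. S \<subseteq> {1..n} \<longrightarrow> p S \<noteq> \<infinity> \<longrightarrow> card S = r)"

definition prank :: "nat \<Rightarrow> (nat set \<Rightarrow> ereal) \<Rightarrow> nat" where
  "prank n p = card (SOME S. S \<subseteq> {1..n} \<and> p S \<noteq> \<infinity>)"

definition pdual :: "nat \<Rightarrow> (nat set \<Rightarrow> ereal) \<Rightarrow> nat set \<Rightarrow> ereal" where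
  "pdual n p S = p ({1..n} - S)"

definition dvec :: "(nat set \<Rightarrow> ereal) \<Rightarrow> nat set \<Rightarrow> nat \<Rightarrow> ereal" where
  "dvec p T i = (if i \<in> T then p (T - {i}) else \<infinity>)"

definition pluecker_circuit :: "nat \<Rightarrow> (nat set \<Rightarrow> ereal) \<Rightarrow> (nat \<Rightarrow> ereal) \<Rightarrow> bool" where
  "pluecker_circuit n p v \<longleftrightarrow> (\<exists>T (lam::real). T \<subseteq> {1..n} \<and> card T = prank n p + 1 \<and>
     (\<forall>i\<in>{1..n}. v i = dvec p T i + ereal lam) \<and> (\<exists>i\<in>{1..n}. v i \<noteq> \<infinity>))"

definition tls :: "nat \<Rightarrow> (nat set \<Rightarrow> ereal) \<Rightarrow> (nat \<Rightarrow> ereal) set" where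
  "tls n p = {x. (\<forall>i\<in>{1..n}. trop (x i)) \<and>
     (\<forall>v. pluecker_circuit n p v \<longrightarrow> trop_orth {1..n} x v)}"

definition Jset :: "nat \<Rightarrow> (nat + nat) set" where
  "Jset n = Inl ` {1..n} \<union> Inr ` {1..n}"

definition bar :: "nat \<Rightarrow> nat set \<Rightarrow> (nat + nat) set" where
  "bar n S = Inl ` S \<union> Inr ` ({1..n} - S)"

text \<open>pbar (bar S) = p S; on other subsets of J it is irrelevant.\<close>
definition pbar :: "(nat set \<Rightarrow> ereal) \<Rightarrow> (nat + nat) set \<Rightarrow> ereal" where
  "pbar p A = p {i. Inl i \<in> A}"

definition idx :: "nat + nat \<Rightarrow> nat" where
  "idx j = (case j of Inl i \<Rightarrow> i | Inr i \<Rightarrow> i)"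

definition cvec :: "nat \<Rightarrow> (nat set \<Rightarrow> ereal) \<Rightarrow> nat set \<Rightarrow> nat + nat \<Rightarrow> ereal" where
  "cvec n p T j = (if j \<in> bar n T then
      pbar p ((bar n T - {Inl (idx j), Inr (idx j)}) \<union> ({Inl (idx j), Inr (idx j)} - bar n T))
    else \<infinity>)"

definition circuit :: "nat \<Rightarrow> (nat set \<Rightarrow> ereal) \<Rightarrow> (nat + nat \<Rightarrow> ereal) \<Rightarrow> bool" where
  "circuit n p v \<longleftrightarrow> (\<exists>T (lam::real). T \<subseteq> {1..n} \<and>
     (\<forall>j\<in>Jset n. v j = cvec n p T j + ereal lam) \<and> (\<exists>j\<in>Jset n. v j \<noteq> \<infinity>))"

definition circuits_perp :: "nat \<Rightarrow> (nat set \<Rightarrow> ereal) \<Rightarrow> (nat + nat \<Rightarrow> ereal) set" where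
  "circuits_perp n p = {x. (\<forall>j\<in>Jset n. trop (x j)) \<and>
     (\<forall>v. circuit n p v \<longrightarrow> trop_orth (Jset n) x v)}"

end

theory Submission imports Defs begin

lemma min_twice_cong: "(\<And>i. i \<in> I \<Longrightarrow> f i = g i) \<Longrightarrow> min_twice I f = min_twice I g"
  unfolding min_twice_def by (metis (no_types, lifting) INF_cong)

lemma mt_reduce:
  assumes "inj g" "\<forall>b\<in>B. f b = \<infinity>"
  shows "min_twice (g ` A \<union> B) f \<longleftrightarrow> min_twice A (f \<circ> g)"
proof -
  have inf: "(INF k\<in>g ` A \<union> B. f k) = (INF k\<in>A. (f \<circ> g) k)"
  proof -
    have "(INF k\<in>g ` A \<union> B. f k) = min (INF k\<in>g ` A. f k) (INF k\<in>B. f k)"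
      by (simp add: INF_union inf_min)
    also have "(INF k\<in>B. f k) = \<infinity>" using assms(2) INF_top_conv(1)[where 'a=ereal, unfolded top_ereal_def] by metis
    finally show ?thesis by (simp add: image_comp)
  qed
  show ?thesis
  proof
    assume "min_twice (g ` A \<union> B) f"
    then show "min_twice A (f \<circ> g)"
      unfolding min_twice_def inf
    proof (elim disjE)
      assume "\<exists>i\<in>g ` A \<union> B. \<exists>j\<in>g ` A \<union> B. i \<noteq> j \<and> f i = (INF k\<in>A. (f \<circ> g) k) \<and> f j = (INF k\<in>A. (f \<circ> g) k)"
      then obtain i j where ij: "i\<in>g ` A \<union> B" "j\<in>g ` A \<union> B" "i \<noteq> j" "f i = (INF k\<in>A. (f \<circ> g) k)" "f j = (INF k\<in>A. (f \<circ> g) k)" by blast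
      show "(INF k\<in>A. (f \<circ> g) k) = \<infinity> \<or> (\<exists>i\<in>A. \<exists>j\<in>A. i \<noteq> j \<and> (f \<circ> g) i = (INF k\<in>A. (f \<circ> g) k) \<and> (f \<circ> g) j = (INF k\<in>A. (f \<circ> g) k))"
      proof (cases "(INF k\<in>A. (f \<circ> g) k) = \<infinity>")
        case False
        then have "i \<in> g ` A" "j \<in> g ` A" using ij assms(2) by auto
        then obtain a b where ab: "a \<in> A" "b \<in> A" "i = g a" "j = g b" by blast
        then show ?thesis using ij by (intro disjI2 bexI[of _ a] bexI[of _ b]) auto
      qed simp
    qed simp
  next
    assume "min_twice A (f \<circ> g)"
    then show "min_twice (g ` A \<union> B) f"
      unfolding min_twice_def inf
      using assms(1) by (metis (no_types, lifting) UnI1 comp_apply image_eqI inj_eq)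
  qed
qed

lemma cvec_Inl: "T \<subseteq> {1..n} \<Longrightarrow> i \<in> {1..n} \<Longrightarrow>
  cvec n p T (Inl i) = (if i \<in> T then p (T - {i}) else \<infinity>)"
proof -
  assume a: "T \<subseteq> {1..n}" "i \<in> {1..n}"
  have "i \<in> T \<Longrightarrow> {k. Inl k \<in> (bar n T - {Inl i, Inr i}) \<union> ({Inl i, Inr i} - bar n T)} = T - {i}"
    unfolding bar_def using a by auto
  then show ?thesis unfolding cvec_def pbar_def idx_def by (auto simp: bar_def)
qed

lemma cvec_Inr: "T \<subseteq> {1..n} \<Longrightarrow> i \<in> {1..n} \<Longrightarrow>
  cvec n p T (Inr i) = (if i \<notin> T then p (insert i T) else \<infinity>)"
proof -
  assume a: "T \<subseteq> {1..n}" "i \<in> {1..n}"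
  have "i \<notin> T \<Longrightarrow> {k. Inl k \<in> (bar n T - {Inl i, Inr i}) \<union> ({Inl i, Inr i} - bar n T)} = insert i T"
    unfolding bar_def using a by auto
  then show ?thesis unfolding cvec_def pbar_def idx_def using a by (auto simp: bar_def)
qed

lemma supp_card:
  assumes "trop_pluecker n p" "S \<subseteq> {1..n}" "p S \<noteq> \<infinity>"
  shows "card S = prank n p"
proof -
  obtain r where r: "\<forall>S. S \<subseteq> {1..n} \<longrightarrow> p S \<noteq> \<infinity> \<longrightarrow> card S = r"
    using assms(1) unfolding trop_pluecker_def by blast
  have "(SOME S. S \<subseteq> {1..n} \<and> p S \<noteq> \<infinity>) \<subseteq> {1..n} \<and> p (SOME S. S \<subseteq> {1..n} \<and> p S \<noteq> \<infinity>) \<noteq> \<infinity>"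
    by (rule someI[of _ S]) (use assms in auto)
  then show ?thesis using r assms unfolding prank_def by metis
qed

lemma prank_dual:
  assumes "trop_pluecker n p" "S \<subseteq> {1..n}" "p S \<noteq> \<infinity>"
  shows "prank n (pdual n p) = n - prank n p"
proof -
  define S' where "S' = (SOME S'. S' \<subseteq> {1..n} \<and> pdual n p S' \<noteq> \<infinity>)"
  have "S' \<subseteq> {1..n} \<and> pdual n p S' \<noteq> \<infinity>"
    unfolding S'_def by (rule someI[of _ "{1..n} - S"]) (use assms in \<open>auto simp: pdual_def Diff_Diff_Int Int_absorb1\<close>)
  then have s: "S' \<subseteq> {1..n}" "p ({1..n} - S') \<noteq> \<infinity>" by (auto simp: pdual_def)
  have "card ({1..n} - S') = prank n p" using supp_card[OF assms(1) _ s(2)] by auto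
  moreover have "card ({1..n} - S') = n - card S'" using s(1) by (simp add: card_Diff_subset finite_subset)
  moreover have "card S' \<le> n" using s(1) by (metis card_atLeastAtMost card_mono diff_Suc_1 finite_atLeastAtMost)
  ultimately show ?thesis unfolding prank_def S'_def[symmetric] by simp
qed

lemma orth_L:
  assumes "\<forall>i\<in>{1..n}. trop (y i)" "\<forall>i\<in>{1..n}. w (Inr i) = \<infinity>"
  shows "trop_orth (Jset n) (case_sum x y) w \<longleftrightarrow> trop_orth {1..n} x (\<lambda>i. w (Inl i))"
proof -
  have "min_twice (Inl ` {1..n} \<union> Inr ` {1..n}) (\<lambda>k. case_sum x y k + w k) \<longleftrightarrow>
        min_twice {1..n} ((\<lambda>k. case_sum x y k + w k) \<circ> Inl)"
    by (rule mt_reduce) (use assms in \<open>auto simp: trop_def\<close>)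
  then show ?thesis unfolding trop_orth_def Jset_def by (simp add: comp_def)
qed

lemma orth_R:
  assumes "\<forall>i\<in>{1..n}. trop (x i)" "\<forall>i\<in>{1..n}. w (Inl i) = \<infinity>"
  shows "trop_orth (Jset n) (case_sum x y) w \<longleftrightarrow> trop_orth {1..n} y (\<lambda>i. w (Inr i))"
proof -
  have "min_twice (Inr ` {1..n} \<union> Inl ` {1..n}) (\<lambda>k. case_sum x y k + w k) \<longleftrightarrow>
        min_twice {1..n} ((\<lambda>k. case_sum x y k + w k) \<circ> Inr)"
    by (rule mt_reduce) (use assms in \<open>auto simp: trop_def\<close>)
  then show ?thesis unfolding trop_orth_def Jset_def by (simp add: comp_def Un_commute)
qed

lemma perp_x:
  assumes P: "trop_pluecker n p" and X: "case_sum x y \<in> circuits_perp n p"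
  shows "x \<in> tls n p"
proof -
  have tj: "\<forall>j\<in>Jset n. trop (case_sum x y j)" and orth: "\<And>v. circuit n p v \<Longrightarrow> trop_orth (Jset n) (case_sum x y) v"
    using X unfolding circuits_perp_def by auto
  have tx: "\<forall>i\<in>{1..n}. trop (x i)" and ty: "\<forall>i\<in>{1..n}. trop (y i)"
    using tj unfolding Jset_def by (metis UnI1 image_eqI sum.case(1), metis UnI2 image_eqI sum.case(2))
  show ?thesis unfolding tls_def
  proof (intro CollectI conjI allI impI tx)
    fix v assume "pluecker_circuit n p v"
    then obtain T lam i0 where T: "T \<subseteq> {1..n}" "card T = prank n p + 1"
      and v: "\<forall>i\<in>{1..n}. v i = dvec p T i + ereal lam" and i0: "i0 \<in> {1..n}" "v i0 \<noteq> \<infinity>"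
      unfolding pluecker_circuit_def by blast
    have fT: "finite T" using T(1) finite_subset by blast
    have i0T: "i0 \<in> T" and pT: "p (T - {i0}) \<noteq> \<infinity>" using v i0 by (auto simp: dvec_def split: if_splits)
    have big: "p (insert i T) = \<infinity>" if "i \<in> {1..n}" "i \<notin> T" for i
    proof (rule ccontr)
      assume "p (insert i T) \<noteq> \<infinity>"
      then have "card (insert i T) = prank n p" using supp_card[OF P] T(1) that by auto
      then show False using T(2) fT that by simp
    qed
    define w where "w = case_sum (\<lambda>i. dvec p T i + ereal lam) (\<lambda>i::nat. \<infinity>)"
    have wInr: "\<forall>i\<in>{1..n}. w (Inr i) = \<infinity>" unfolding w_def by simp
    have "circuit n p w" unfolding circuit_def
    proof (intro exI[of _ T] exI[of _ lam] conjI T(1) ballI)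
      fix j assume "j \<in> Jset n"
      then show "w j = cvec n p T j + ereal lam"
        unfolding Jset_def w_def using T(1) big by (auto simp: cvec_Inl cvec_Inr dvec_def)
    next
      show "\<exists>j\<in>Jset n. w j \<noteq> \<infinity>"
        using i0 v unfolding Jset_def w_def by (intro bexI[of _ "Inl i0"]) auto
    qed
    then have "trop_orth (Jset n) (case_sum x y) w" by (rule orth)
    then have "trop_orth {1..n} x (\<lambda>i. w (Inl i))" using orth_L[OF ty wInr] by simp
    then show "trop_orth {1..n} x v" unfolding trop_orth_def
      by (subst min_twice_cong[where g = "\<lambda>k. x k + w (Inl k)"]) (auto simp: v w_def)
  qed
qed

lemma perp_y:
  assumes P: "trop_pluecker n p" and X: "case_sum x y \<in> circuits_perp n p"
  shows "y \<in> tls n (pdual n p)"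
proof -
  have tj: "\<forall>j\<in>Jset n. trop (case_sum x y j)" and orth: "\<And>v. circuit n p v \<Longrightarrow> trop_orth (Jset n) (case_sum x y) v"
    using X unfolding circuits_perp_def by auto
  have tx: "\<forall>i\<in>{1..n}. trop (x i)" and ty: "\<forall>i\<in>{1..n}. trop (y i)"
    using tj unfolding Jset_def by (metis UnI1 image_eqI sum.case(1), metis UnI2 image_eqI sum.case(2))
  show ?thesis unfolding tls_def
  proof (intro CollectI conjI allI impI ty)
    fix v assume "pluecker_circuit n (pdual n p) v"
    then obtain T' lam i0 where T': "T' \<subseteq> {1..n}"
      and v: "\<forall>i\<in>{1..n}. v i = dvec (pdual n p) T' i + ereal lam" and i0: "i0 \<in> {1..n}" "v i0 \<noteq> \<infinity>"
      unfolding pluecker_circuit_def by blast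
    define T where "T = {1..n} - T'"
    have T: "T \<subseteq> {1..n}" unfolding T_def by auto
    have fT: "finite T" using T finite_subset by blast
    have eq: "{1..n} - (T' - {i}) = insert i T" if "i \<in> {1..n}" for i
      using that T' unfolding T_def by auto
    have mem: "i \<in> T' \<longleftrightarrow> i \<notin> T" if "i \<in> {1..n}" for i using that T' unfolding T_def by auto
    have i0T: "i0 \<notin> T" and pT: "p (insert i0 T) \<noteq> \<infinity>"
      using v i0 mem[OF i0(1)] eq[OF i0(1)] by (auto simp: dvec_def pdual_def split: if_splits)
    have cT: "card (insert i0 T) = prank n p" using supp_card[OF P _ pT] T i0 by auto
    have small: "p (T - {i}) = \<infinity>" if "i \<in> T" for i
    proof (rule ccontr)
      assume "p (T - {i}) \<noteq> \<infinity>"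
      then have "card (T - {i}) = prank n p" using supp_card[OF P, of "T - {i}"] T by auto
      then show False using cT fT that i0T
        by (simp add: card_Diff_singleton)
    qed
    define w where "w = case_sum (\<lambda>i::nat. \<infinity>) (\<lambda>i. dvec (pdual n p) T' i + ereal lam)"
    have wInl: "\<forall>i\<in>{1..n}. w (Inl i) = \<infinity>" unfolding w_def by simp
    have "circuit n p w" unfolding circuit_def
    proof (intro exI[of _ T] exI[of _ lam] conjI T ballI)
      fix j assume "j \<in> Jset n"
      then show "w j = cvec n p T j + ereal lam"
        unfolding Jset_def w_def using T small mem eq by (auto simp: cvec_Inl cvec_Inr dvec_def pdual_def)
    next
      show "\<exists>j\<in>Jset n. w j \<noteq> \<infinity>"
        using i0 v unfolding Jset_def w_def by (intro bexI[of _ "Inr i0"]) auto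
    qed
    then have "trop_orth (Jset n) (case_sum x y) w" by (rule orth)
    then have "trop_orth {1..n} y (\<lambda>i. w (Inr i))" using orth_R[OF tx wInl] by simp
    then show "trop_orth {1..n} y v" unfolding trop_orth_def
      by (subst min_twice_cong[where g = "\<lambda>k. y k + w (Inr k)"]) (auto simp: v w_def)
  qed
qed

lemma tls_perp:
  assumes P: "trop_pluecker n p" and X: "x \<in> tls n p" and Y: "y \<in> tls n (pdual n p)"
  shows "case_sum x y \<in> circuits_perp n p"
proof -
  have tx: "\<forall>i\<in>{1..n}. trop (x i)" and ox: "\<And>v. pluecker_circuit n p v \<Longrightarrow> trop_orth {1..n} x v"
    using X unfolding tls_def by auto
  have ty: "\<forall>i\<in>{1..n}. trop (y i)" and oy: "\<And>v. pluecker_circuit n (pdual n p) v \<Longrightarrow> trop_orth {1..n} y v"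
    using Y unfolding tls_def by auto
  show ?thesis unfolding circuits_perp_def
  proof (intro CollectI conjI allI impI)
    show "\<forall>j\<in>Jset n. trop (case_sum x y j)" using tx ty unfolding Jset_def by auto
  next
    fix v assume "circuit n p v"
    then obtain T lam j0 where T: "T \<subseteq> {1..n}"
      and v: "\<forall>j\<in>Jset n. v j = cvec n p T j + ereal lam" and j0: "j0 \<in> Jset n" "v j0 \<noteq> \<infinity>"
      unfolding circuit_def by blast
    have fT: "finite T" using T finite_subset by blast
    have vL: "v (Inl i) = cvec n p T (Inl i) + ereal lam" if "i \<in> {1..n}" for i
      using v that unfolding Jset_def by blast
    have vR: "v (Inr i) = cvec n p T (Inr i) + ereal lam" if "i \<in> {1..n}" for i
      using v that unfolding Jset_def by blast
    show "trop_orth (Jset n) (case_sum x y) v"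
    proof (cases j0)
      case (Inl i0)
      then have i0: "i0 \<in> {1..n}" using j0 unfolding Jset_def by auto
      have i0T: "i0 \<in> T" and pT: "p (T - {i0}) \<noteq> \<infinity>"
        using j0(2) vL[OF i0] T i0 Inl by (auto simp: cvec_Inl split: if_splits)
      have cT: "card (T - {i0}) = prank n p" using supp_card[OF P, of "T - {i0}"] T pT by auto
      then have cT': "card T = prank n p + 1" using fT i0T
        by (metis One_nat_def Suc_pred add.right_neutral add_Suc_right card_Diff_singleton card_gt_0_iff empty_iff)
      have big: "p (insert i T) = \<infinity>" if "i \<in> {1..n}" "i \<notin> T" for i
      proof (rule ccontr)
        assume "p (insert i T) \<noteq> \<infinity>"
        then have "card (insert i T) = prank n p" using supp_card[OF P, of "insert i T"] T that by auto
        then show False using cT' fT that by simp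
      qed
      have vInr: "\<forall>i\<in>{1..n}. v (Inr i) = \<infinity>" using vR big T by (auto simp: cvec_Inr)
      have "pluecker_circuit n p (\<lambda>i. v (Inl i))" unfolding pluecker_circuit_def
        using T cT' vL i0 j0(2) Inl by (intro exI[of _ T] exI[of _ lam] conjI ballI bexI[of _ i0])
          (auto simp: cvec_Inl dvec_def)
      then have "trop_orth {1..n} x (\<lambda>i. v (Inl i))" by (rule ox)
      then show ?thesis using orth_L[OF ty vInr] by simp
    next
      case (Inr i0)
      then have i0: "i0 \<in> {1..n}" using j0 unfolding Jset_def by auto
      have i0T: "i0 \<notin> T" and pT: "p (insert i0 T) \<noteq> \<infinity>"
        using j0(2) vR[OF i0] T i0 Inr by (auto simp: cvec_Inr split: if_splits)
      have ST: "insert i0 T \<subseteq> {1..n}" using T i0 by auto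
      have cT: "card (insert i0 T) = prank n p" using supp_card[OF P ST pT] .
      have rn: "prank n p \<le> n" using ST cT by (metis card_atLeastAtMost card_mono diff_Suc_1 finite_atLeastAtMost)
      have small: "p (T - {i}) = \<infinity>" if "i \<in> T" for i
      proof (rule ccontr)
        assume "p (T - {i}) \<noteq> \<infinity>"
        then have "card (T - {i}) = prank n p" using supp_card[OF P, of "T - {i}"] T by auto
        then show False using cT fT that i0T by (simp add: card_Diff_singleton)
      qed
      have vInl: "\<forall>i\<in>{1..n}. v (Inl i) = \<infinity>" using vL small T by (auto simp: cvec_Inl)
      define T' where "T' = {1..n} - T"
      have eq: "{1..n} - (T' - {i}) = insert i T" if "i \<in> {1..n}" for i
        using that T unfolding T'_def by auto
      have mem: "i \<in> T' \<longleftrightarrow> i \<notin> T" if "i \<in> {1..n}" for i using that T unfolding T'_def by auto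
      have pd: "prank n (pdual n p) = n - prank n p" using prank_dual[OF P ST pT] .
      have cT': "card T' = prank n (pdual n p) + 1"
        unfolding pd T'_def using cT fT i0T rn T by (simp add: card_Diff_subset)
      have "pluecker_circuit n (pdual n p) (\<lambda>i. v (Inr i))" unfolding pluecker_circuit_def
      proof (intro exI[of _ T'] exI[of _ lam] conjI ballI bexI[of _ i0])
        show "T' \<subseteq> {1..n}" unfolding T'_def by auto
        show "card T' = prank n (pdual n p) + 1" by (rule cT')
        show "i0 \<in> {1..n}" by (rule i0)
        show "v (Inr i0) \<noteq> \<infinity>" using j0(2) Inr by simp
      next
        fix i assume i: "i \<in> {1..n}"
        show "v (Inr i) = dvec (pdual n p) T' i + ereal lam"
          using vR[OF i] T i mem[OF i] eq[OF i] by (auto simp: cvec_Inr dvec_def pdual_def)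
      qed
      then have "trop_orth {1..n} y (\<lambda>i. v (Inr i))" by (rule oy)
      then show ?thesis using orth_R[OF tx vInl] by simp
    qed
  qed
qed

theorem proposition6p13:
  fixes n :: nat and p :: "nat set \<Rightarrow> ereal"
  assumes "trop_pluecker n p"
  shows "\<forall>x y :: nat \<Rightarrow> ereal. case_sum x y \<in> circuits_perp n p \<longleftrightarrow>
           x \<in> tls n p \<and> y \<in> tls n (pdual n p)"
  using perp_x[OF assms] perp_y[OF assms] tls_perp[OF assms] by blast

end
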